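(* Let $m\ge3$ be odd and $n\ge2$. Every completely positive tensor $\mathcal{A}\in S_{m,n}$ is strongly positive semi-definite. Furthermore, suppose $\mathcal{A}=\sum_{l=1}^r(\mathbf{u}^{(l)})^m$ with nonnegative vectors $\mathbf{u}^{(1)},\dots,\mathbf{u}^{(r)}\in\mathbb{R}^n$, and for each $i\in\{1,\dots,n\}$ let $\Gamma_i=\{l\in\{1,\dots,r\}: u^{(l)}_i\ne 0\}$. If the vectors $\{\mathbf{u}^{(l)}: l\in\Gamma_i\}$ span $\mathbb{R}^n$ (i.e. the matrix with these columns has rank $n$) for every $i\in\{1,\dots,n\}$, then $\mathcal{A}$ is strongly positive definite.
   Context: $S_{m,n}$ is the set of real symmetric $m$th order $n$-dimensional tensors. For $\mathbf{u}\in\mathbb{R}^n$, $\mathbf{u}^m$ is the tensor with entries $u_{i_1}\cdots u_{i_m}$. A tensor is completely positive if it equals $\sum_{l=1}^r(\mathbf{u}^{(l)})^m$ for some positive integer $r$ and nonnegative vectors $\mathbf{u}^{(l)}\in\mathbb{R}^n$. For $\mathbf{x}\in\mathbb{R}^n$, $\mathcal{A}\mathbf{x}^{m-1}$ is the vector with $i$th component $\sum_{i_2,\dots,i_m}a_{ii_2\dots i_m}x_{i_2}\cdots x_{i_m}$. For odd $m$, $\mathcal{A}\in S_{m,n}$ is strongly positive semi-definite if $\mathcal{A}\mathbf{x}^{m-1}\ge\mathbf{0}$ componentwise for all $\mathbf{x}\in\mathbb{R}^n$, and strongly positive definite if $\mathcal{A}\mathbf{x}^{m-1}>\mathbf{0}$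 componentwise for all nonzero $\mathbf{x}$. *)

theory Defs
  imports "HOL-Analysis.Analysis"
begin

text \<open>A real m-th order tensor of dimension n = CARD('n) is a function from
index lists (i_1,...,i_m) to reals; only lists of length m are meaningful.\<close>

type_synonym 'n tensor = "'n list \<Rightarrow> real"

definition symmetric_tensor :: "nat \<Rightarrow> 'n tensor \<Rightarrow> bool" where
  "symmetric_tensor m A \<longleftrightarrow>
     (\<forall>is js. length is = m \<and> length js = m \<and> mset is = mset js \<longrightarrow> A is = A js)"

definition tensor_power :: "real ^ 'n \<Rightarrow> 'n tensor" where
  "tensor_power u = (\<lambda>is. prod_list (map (\<lambda>i. u $ i) is))"

definition cp_decomposition :: "nat \<Rightarrow> 'n tensor \<Rightarrow> nat \<Rightarrow> (nat \<Rightarrow> real ^ 'n) \<Rightarrow> bool" where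
  "cp_decomposition m A r us \<longleftrightarrow>
     0 < r \<and> (\<forall>l<r. \<forall>i. 0 \<le> us l $ i) \<and>
     (\<forall>is. length is = m \<longrightarrow> A is = (\<Sum>l<r. tensor_power (us l) is))"

definition completely_positive :: "nat \<Rightarrow> 'n::finite tensor \<Rightarrow> bool" where
  "completely_positive m A \<longleftrightarrow> (\<exists>r us. cp_decomposition m A r us)"

definition tensor_apply :: "nat \<Rightarrow> 'n::finite tensor \<Rightarrow> real ^ 'n \<Rightarrow> real ^ 'n" where
  "tensor_apply m A x = (\<chi> i. \<Sum>is\<in>{is. length is = m - 1}.
       A (i # is) * prod_list (map (\<lambda>j. x $ j) is))"

definition strongly_psd :: "nat \<Rightarrow> 'n::finite tensor \<Rightarrow> bool" where
  "strongly_psd m A \<longleftrightarrow> (\<forall>x. \<forall>i. 0 \<le> tensor_apply m A x $ i)"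

definition strongly_pd :: "nat \<Rightarrow> 'n::finite tensor \<Rightarrow> bool" where
  "strongly_pd m A \<longleftrightarrow> (\<forall>x. x \<noteq> 0 \<longrightarrow> (\<forall>i. 0 < tensor_apply m A x $ i))"

end

theory Submission
  imports Defs
begin

lemma fin_lists: "finite {is::'n::finite list. length is = k}"
  using finite_lists_length_eq[of "UNIV::'n set" k] by simp

lemma lists_Suc: "{is::'n list. length is = Suc k} =
   (\<lambda>(j, is). j # is) ` (UNIV \<times> {is. length is = k})"
  by (auto simp: length_Suc_conv)

lemma sum_lists_prod:
  "(\<Sum>is\<in>{is::'n::finite list. length is = k}. prod_list (map f is)) = (\<Sum>j\<in>UNIV. (f j::real))^k"
proof (induction k)
  case 0
  then show ?case by simp
next
  case (Suc k)
  have inj: "inj_on (\<lambda>(j, is). j # is) (UNIV \<times> {is::'n list. length is = k})"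
    by (auto simp: inj_on_def)
  have "(\<Sum>is\<in>{is::'n list. length is = Suc k}. prod_list (map f is))
      = (\<Sum>p\<in>UNIV \<times> {is::'n list. length is = k}. prod_list (map f (fst p # snd p)))"
    unfolding lists_Suc by (subst sum.reindex[OF inj]) (auto intro!: sum.cong)
  also have "\<dots> = (\<Sum>j\<in>UNIV. \<Sum>is\<in>{is::'n list. length is = k}. f j * prod_list (map f is))"
    by (subst sum.cartesian_product) (simp add: case_prod_beta)
  also have "\<dots> = (\<Sum>j\<in>UNIV. f j * (\<Sum>j\<in>UNIV. f j)^k)"
    by (simp add: sum_distrib_left[symmetric] Suc)
  also have "\<dots> = (\<Sum>j\<in>UNIV. f j)^Suc k"
    by (simp add: sum_distrib_right[symmetric])
  finally show ?case .
qed

lemma prod_list_mult: "prod_list (map f is) * prod_list (map g is) = prod_list (map (\<lambda>j. (f j::real) * g j) is)"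
  by (induction "is") (auto simp: algebra_simps)

lemma apply_formula:
  fixes us :: "nat \<Rightarrow> real ^ 'n::finite"
  assumes "cp_decomposition m A r us" "m \<ge> 1"
  shows "tensor_apply m A x $ i = (\<Sum>l<r. us l $ i * (us l \<bullet> x)^(m-1))"
proof -
  have A: "A (i # is) = (\<Sum>l<r. us l $ i * prod_list (map (\<lambda>j. us l $ j) is))"
    if "length is = m - 1" for "is"
    using assms that unfolding cp_decomposition_def tensor_power_def by auto
  have "tensor_apply m A x $ i = (\<Sum>is\<in>{is. length is = m - 1}.
       (\<Sum>l<r. us l $ i * prod_list (map (\<lambda>j. us l $ j * x $ j) is)))"
    unfolding tensor_apply_def
    by (auto intro!: sum.cong simp: A sum_distrib_right sum_distrib_left prod_list_mult[symmetric] algebra_simps)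
  also have "\<dots> = (\<Sum>l<r. us l $ i * (\<Sum>is\<in>{is. length is = m - 1}.
        prod_list (map (\<lambda>j. us l $ j * x $ j) is)))"
    by (subst sum.swap) (simp add: sum_distrib_left)
  also have "\<dots> = (\<Sum>l<r. us l $ i * (us l \<bullet> x)^(m-1))"
    by (simp add: sum_lists_prod inner_vec_def)
  finally show ?thesis .
qed

theorem theorem3p4:
  fixes m :: nat and A :: "'n::finite tensor"
  assumes "odd m" and "m \<ge> 3" and "CARD('n) \<ge> 2"
    and "symmetric_tensor m A"
  shows "(completely_positive m A \<longrightarrow> strongly_psd m A) \<and>
         (\<forall>r us. cp_decomposition m A r us \<and>
            (\<forall>i. span {us l | l. l < r \<and> us l $ i \<noteq> 0} = UNIV)
            \<longrightarrow> strongly_pd m A)"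
proof
  have ev: "even (m - 1)" using assms(1,2) by simp
  have m1: "m \<ge> 1" using assms(2) by simp
  show "completely_positive m A \<longrightarrow> strongly_psd m A"
  proof
    assume "completely_positive m A"
    then obtain r us where d: "cp_decomposition m A r us" unfolding completely_positive_def by auto
    show "strongly_psd m A" unfolding strongly_psd_def
    proof (intro allI)
      fix x i
      show "0 \<le> tensor_apply m A x $ i"
        unfolding apply_formula[OF d m1, of x i] using assms(2)
        using d ev unfolding cp_decomposition_def
        by (intro sum_nonneg mult_nonneg_nonneg) (auto simp: zero_le_even_power)
    qed
  qed
  show "\<forall>r us. cp_decomposition m A r us \<and>
            (\<forall>i. span {us l | l. l < r \<and> us l $ i \<noteq> 0} = UNIV)
            \<longrightarrow> strongly_pd m A"
  proof (intro allI impI)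
    fix r us assume H: "cp_decomposition m A r us \<and>
            (\<forall>i. span {us l | l. l < r \<and> us l $ i \<noteq> 0} = UNIV)"
    then have d: "cp_decomposition m A r us" by simp
    have nn: "\<And>l i. l < r \<Longrightarrow> 0 \<le> us l $ i" using d unfolding cp_decomposition_def by auto
    show "strongly_pd m A" unfolding strongly_pd_def
    proof (intro allI impI)
      fix x :: "real^'n" and i assume x: "x \<noteq> 0"
      have "\<exists>l. l < r \<and> us l $ i \<noteq> 0 \<and> us l \<bullet> x \<noteq> 0"
      proof (rule ccontr)
        assume "\<not> ?thesis"
        then have "orthogonal x y" if "y \<in> {us l | l. l < r \<and> us l $ i \<noteq> 0}" for y
          using that by (auto simp: orthogonal_def inner_commute)
        then have "orthogonal x x"
          using orthogonal_to_span[of x "{us l | l. l < r \<and> us l $ i \<noteq> 0}" x] H by auto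
        then show False using x by (simp add: orthogonal_def)
      qed
      then obtain l where l: "l < r" "us l $ i \<noteq> 0" "us l \<bullet> x \<noteq> 0" by auto
      have pos: "0 < us l $ i * (us l \<bullet> x)^(m-1)"
      proof (rule mult_pos_pos)
        show "0 < us l $ i" using l nn[of l i] by simp
        have "0 \<le> (us l \<bullet> x)^(m-1)" using ev by (simp add: zero_le_even_power)
        moreover have "(us l \<bullet> x)^(m-1) \<noteq> 0" using l by simp
        ultimately show "0 < (us l \<bullet> x)^(m-1)" by (simp only: less_le) simp
      qed
      have "us l $ i * (us l \<bullet> x)^(m-1) \<le> (\<Sum>l<r. us l $ i * (us l \<bullet> x)^(m-1))"
        using l nn ev by (intro member_le_sum) (auto simp: zero_le_even_power)
      then show "0 < tensor_apply m A x $ i"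
        unfolding apply_formula[OF d m1, of x i] using pos assms(2) by linarith
    qed
  qed
qed

end
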